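(* Let $(M,J)$ be an almost complex manifold and $\phi$ a Beltrami differential with $\det(I'-\phi\cdot\bar\phi)\neq0$ everywhere. Then, as operators on complex differential forms on $M$, $$e^{-i_\phi}\circ e^{i_\phi|i_{\bar\phi}}=(I-\bar\phi\cdot\phi+\bar\phi)\Finv,$$ $$\big(e^{i_\phi|i_{\bar\phi}}\big)^{-1}\circ e^{i_\phi}=\big(I'+(I''-\bar\phi\cdot\phi)^{-1}-\bar\phi\cdot(I'-\phi\cdot\bar\phi)^{-1}\big)\Finv.$$
   Context: $(M,J)$ is a smooth almost complex manifold of real dimension $2n$ ($J$ not assumed integrable). Locally $\{\theta^i\}_{i=1}^n$ is a frame of $(1,0)$-forms, $\{e_i\}$ the dual frame of $T^{1,0}M$, $\theta^{\bar i}=\overline{\theta^i}$, $e_{\bar i}=\overline{e_i}$. A Beltrami differential is $\phi\in A^{0,1}(M,T^{1,0}M)$. Contraction: $(\rho\otimes X)\lrcorner\alpha:=\rho\wedge(X\lrcorner\alpha)$, extended linearly; $i_\phi=\phi\lrcorner$, $e^{\pm i_\phi}:=\sum_k\frac{(\pm1)^k}{k!}i_\phi^k$. Write $\phi=\phi^i_{\bar j}\theta^{\bar j}\otimes e_i$ and $\bar\phi=\phi^{\bar i}_j\theta^j\otimes e_{\bar i}$ with $\phi^{\bar i}_j=\overline{\phi^i_{\bar j}}$. Identify these with $n\times n$ matrices $\phi=(\phi^i_{\bar j})$, $\bar\phi=(\phi^{\bar i}_j)$ (upper index = row) and $I'$, $I''$ with identity matrices; a matrix expression built from them is identified with the vector-valued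 1-form having these coefficients in the corresponding frames (frame independent): $\bar\phi\cdot\phi$ and $(I''-\bar\phi\cdot\phi)^{-1}$ are $T^{0,1}$-valued $(0,1)$-forms (coefficients times $\theta^{\bar j}\otimes e_{\bar i}$), $\bar\phi\cdot(I'-\phi\cdot\bar\phi)^{-1}$ is the $T^{0,1}$-valued $(1,0)$-form $(\bar\phi\cdot(I'-\phi\cdot\bar\phi)^{-1})^{\bar i}_j\theta^j\otimes e_{\bar i}$, $I'=\theta^i\otimes e_i$, $I''=\theta^{\bar i}\otimes e_{\bar i}$, $I=I'+I''$. For a $T^{\mathbb C}M$-valued 1-form $\varphi$, the simultaneous contraction $\varphi\Finv$ is the function-linear map on forms with $\varphi\Finv(f\beta_1\wedge\cdots\wedge\beta_k)=f(\varphi\lrcorner\beta_1)\wedge\cdots\wedge(\varphi\lrcorner\beta_k)$ for 1-forms $\beta_j$ (and $\varphi\Finv f=f$ for functions); it is not additive in $\varphi$. The extended exponential operator is $e^{i_\phi|i_{\bar\phi}}:=(I+\phi+\bar\phi)\Finv$, i.e. it sends $\theta^i\mapsto\theta^i+\phi\lrcorner\theta^i$, $\theta^{\bar j}\mapsto\theta^{\bar j}+\bar\phi\lrcorner\theta^{\bar j}$, extended multiplicatively; under the determinant condition it is a linear isomorphism on forms, and $(e^{i_\phi|i_{\bar\phi}})^{-1}$ denotes its inverse. *)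

theory Defs
  imports "HOL-Analysis.Analysis"
begin

text \<open>Pointwise model.  At a point of M, the complexified cotangent space is spanned by
  the coframe theta^1..theta^n, theta^{1bar}..theta^{nbar}; we index this basis by the type
  'n + 'n (Inl i = unbarred index i, Inr i = barred index i).  Tangent vectors are
  v :: complex^('n+'n) (coefficients w.r.t. e_i, e_{ibar}), and theta^q(v) = v$q.
  A T^C M-valued 1-form sum M_pq theta^q (x) e_p is the matrix M with M$p$q.
  A complex form is a family of k-forms (k = 0,1,2,...), a k-form being an alternating
  complex-multilinear function of k tangent vectors (determinant convention for wedge).\<close>

type_synonym 'n tv = "complex^('n+'n)"
type_synonym 'n form = "nat \<Rightarrow> (nat \<Rightarrow> 'n tv) \<Rightarrow> complex"

definition is_kform :: "nat \<Rightarrow> ((nat \<Rightarrow> 'n::finite tv) \<Rightarrow> complex) \<Rightarrow> bool" where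
  "is_kform k w \<longleftrightarrow>
     (\<forall>vs ws. (\<forall>i<k. vs i = ws i) \<longrightarrow> w vs = w ws) \<and>
     (\<forall>i<k. \<forall>vs x y. w (vs(i := x + y)) = w (vs(i := x)) + w (vs(i := y))) \<and>
     (\<forall>i<k. \<forall>vs (c::complex) x. w (vs(i := c *s x)) = c * w (vs(i := x))) \<and>
     (\<forall>i<k. \<forall>j<k. \<forall>vs. i \<noteq> j \<and> vs i = vs j \<longrightarrow> w vs = 0)"

definition forms :: "'n::finite form set" where
  "forms = {w. \<forall>k. is_kform k (w k)}"

definition theta :: "'n::finite + 'n \<Rightarrow> 'n tv \<Rightarrow> complex" where
  "theta q v = v $ q"

definition frame :: "'n::finite + 'n \<Rightarrow> 'n tv" where
  "frame p = axis p 1"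

definition interior :: "'n::finite tv \<Rightarrow> 'n form \<Rightarrow> 'n form" where
  "interior X a = (\<lambda>k vs. a (Suc k) (\<lambda>i. case i of 0 \<Rightarrow> X | Suc j \<Rightarrow> vs j))"

definition delete_arg :: "nat \<Rightarrow> (nat \<Rightarrow> 'a) \<Rightarrow> nat \<Rightarrow> 'a" where
  "delete_arg j vs = (\<lambda>i. if i < j then vs i else vs (Suc i))"

definition wedge1 :: "('n::finite tv \<Rightarrow> complex) \<Rightarrow> 'n form \<Rightarrow> 'n form" where
  "wedge1 rho g = (\<lambda>k vs. if k = 0 then 0 else
      (\<Sum>j<k. (-1) ^ j * rho (vs j) * g (k - 1) (delete_arg j vs)))"

text \<open>Contraction i_M alpha = M \<lrcorner> alpha for M = sum M_pq theta^q (x) e_p,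
  using (rho (x) X) \<lrcorner> alpha = rho \<and> (X \<lrcorner> alpha), extended linearly.\<close>
definition icontr :: "complex^('n::finite+'n)^('n+'n) \<Rightarrow> 'n form \<Rightarrow> 'n form" where
  "icontr M a = (\<lambda>k vs. \<Sum>p\<in>UNIV. \<Sum>q\<in>UNIV.
      M $ p $ q * wedge1 (theta q) (interior (frame p) a) k vs)"

text \<open>e^{s i_M} = sum_m s^m/m! i_M^m (on k-forms i_M^m = 0 for m > k).\<close>
definition exp_contr :: "complex \<Rightarrow> complex^('n::finite+'n)^('n+'n) \<Rightarrow> 'n form \<Rightarrow> 'n form" where
  "exp_contr s M a = (\<lambda>k vs. \<Sum>m\<le>k. s ^ m / fact m * ((icontr M ^^ m) a) k vs)"

text \<open>Simultaneous contraction M \<Finv>: function-linear and multiplicative with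
  beta \<mapsto> M \<lrcorner> beta = beta \<circ> (M *v _) on 1-forms, i.e. the pullback along M *v _.\<close>
definition simcontr :: "complex^('n::finite+'n)^('n+'n) \<Rightarrow> 'n form \<Rightarrow> 'n form" where
  "simcontr M a = (\<lambda>k vs. a k (\<lambda>i. M *v vs i))"

text \<open>Block matrix with blocks (rows = upper index):
  P : theta^j (x) e_i,  Q : theta^{jbar} (x) e_i,  R : theta^j (x) e_{ibar},  S : theta^{jbar} (x) e_{ibar}.\<close>
definition block :: "complex^'n^'n \<Rightarrow> complex^'n^'n \<Rightarrow> complex^'n^'n \<Rightarrow> complex^'n^'n
    \<Rightarrow> complex^('n::finite+'n)^('n+'n)" where
  "block P Q R S = (\<chi> p q. case p of
       Inl i \<Rightarrow> (case q of Inl j \<Rightarrow> P $ i $ j | Inr j \<Rightarrow> Q $ i $ j)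
     | Inr i \<Rightarrow> (case q of Inl j \<Rightarrow> R $ i $ j | Inr j \<Rightarrow> S $ i $ j))"

definition conj_mat :: "complex^'n^'m \<Rightarrow> complex^'n^'m" where
  "conj_mat A = (\<chi> i j. cnj (A $ i $ j))"

end

theory Submission imports Defs begin


definition cons :: "'a \<Rightarrow> (nat \<Rightarrow> 'a) \<Rightarrow> nat \<Rightarrow> 'a" where
  "cons x f = (\<lambda>i. case i of 0 \<Rightarrow> x | Suc l \<Rightarrow> f l)"

lemma kf_dep: "is_kform k b \<Longrightarrow> (\<And>i. i<k \<Longrightarrow> vs i = ws i) \<Longrightarrow> b vs = b ws"
  unfolding is_kform_def by blast
lemma kf_add: "is_kform k b \<Longrightarrow> i<k \<Longrightarrow> b (vs(i := x + y)) = b (vs(i := x)) + b (vs(i := y))"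
  unfolding is_kform_def by blast
lemma kf_smult: "is_kform k b \<Longrightarrow> i<k \<Longrightarrow> b (vs(i := c *s x)) = c * b (vs(i := x))"
  unfolding is_kform_def by blast
lemma kf_alt: "is_kform k b \<Longrightarrow> i<k \<Longrightarrow> j<k \<Longrightarrow> i \<noteq> j \<Longrightarrow> vs i = vs j \<Longrightarrow> b vs = 0"
  unfolding is_kform_def by blast

lemma kf_zero: assumes "is_kform k b" "i<k" shows "b (vs(i := 0)) = 0"
  using kf_smult[OF assms, of vs 0 0] by simp

lemma kf_sum: assumes "is_kform k b" "i<k" "finite P"
  shows "b (vs(i := (\<Sum>p\<in>P. f p))) = (\<Sum>p\<in>P. b (vs(i := f p)))"
  using assms(3)
proof (induction P rule: finite_induct)
  case empty show ?case by (simp only: sum.empty kf_zero[OF assms(1,2)])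
next
  case (insert p P)
  have "b (vs(i := sum f (insert p P))) = b (vs(i := f p + sum f P))" using insert by simp
  also have "\<dots> = b (vs(i := f p)) + b (vs(i := sum f P))" by (rule kf_add[OF assms(1,2)])
  also have "\<dots> = (\<Sum>p\<in>insert p P. b (vs(i := f p)))" by (simp only: insert.IH sum.insert[OF insert.hyps])
  finally show ?case .
qed

lemma kf_swap: assumes b: "is_kform k b" and "i<k" "l<k" "i\<noteq>l"
  shows "b (vs(i:=x, l:=y)) = - b (vs(i:=y, l:=x))"
proof -
  have z: "b (vs(i:=u, l:=u)) = 0" for u
    by (rule kf_alt[OF b \<open>i<k\<close> \<open>l<k\<close> \<open>i\<noteq>l\<close>]) simp
  have tw: "vs(i:=u, l:=w) = vs(l:=w, i:=u)" for u w using \<open>i\<noteq>l\<close> by (simp add: fun_upd_twist)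
  have "0 = b (vs(i:=x+y, l:=x+y))" using z by simp
  also have "\<dots> = b (vs(l:=x+y, i:=x)) + b (vs(l:=x+y, i:=y))"
    using kf_add[OF b \<open>i<k\<close>] tw by simp
  also have "b (vs(l:=x+y, i:=x)) = b (vs(i:=x, l:=x)) + b (vs(i:=x, l:=y))"
    using kf_add[OF b \<open>l<k\<close>, of "vs(i:=x)"] tw by metis
  also have "b (vs(l:=x+y, i:=y)) = b (vs(i:=y, l:=x)) + b (vs(i:=y, l:=y))"
    using kf_add[OF b \<open>l<k\<close>, of "vs(i:=y)"] tw by metis
  finally have "0 = b (vs(i := x, l := x)) + b (vs(i := x, l := y)) + (b (vs(i := y, l := x)) + b (vs(i := y, l := y)))" .
  then show ?thesis by (simp only: z add_0 add_0_right eq_neg_iff_add_eq_0)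
qed

lemma kf_rot: assumes b: "is_kform k b"
  shows "j<k \<Longrightarrow> b (cons x (delete_arg j vs)) = (-1)^j * b (vs(j:=x))"
proof (induction j arbitrary: vs)
  case 0
  have "cons x (delete_arg 0 vs) = vs(0:=x)"
    by (auto simp: cons_def delete_arg_def fun_eq_iff split: nat.split)
  then show ?case by simp
next
  case (Suc j)
  define vs' where "vs' = vs(Suc j := vs j)"
  have e: "delete_arg j vs' = delete_arg (Suc j) vs"
    by (auto simp: vs'_def delete_arg_def fun_eq_iff less_Suc_eq)
  have "b (cons x (delete_arg (Suc j) vs)) = (-1)^j * b (vs'(j:=x))"
    using Suc.IH[of vs'] Suc.prems e by (simp add: fun_upd_def)
  also have "vs'(j:=x) = vs(j:=x, Suc j := vs j)" by (simp add: vs'_def fun_upd_twist)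
  also have "b \<dots> = - b (vs(j:=vs j, Suc j := x))"
    using kf_swap[OF b, of j "Suc j"] Suc by simp
  finally show ?case by (simp add: fun_upd_def)
qed

lemma cons_upd: "cons y D = (cons z D)(0:=y)"
  by (auto simp: cons_def fun_eq_iff split: nat.split)

lemma vec_expand: "(\<Sum>p\<in>UNIV. (x::complex^('n::finite+'n)) $ p *s frame p) = x"
  by (simp add: vec_eq_iff sum_component frame_def axis_def if_distrib cong: if_cong)

lemma lin0: assumes b: "is_kform k b" and k: "0<k"
  shows "b (cons x D) = (\<Sum>p\<in>UNIV. x $ p * b (cons (frame p) D))"
proof -
  have "b (cons x D) = b ((cons 0 D)(0 := (\<Sum>p\<in>UNIV. x $ p *s frame p)))"
    by (simp only: vec_expand cons_upd[symmetric])
  also have "\<dots> = (\<Sum>p\<in>UNIV. b ((cons 0 D)(0 := x $ p *s frame p)))"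
    by (rule kf_sum[OF b k]) simp
  also have "\<dots> = (\<Sum>p\<in>UNIV. x $ p * b (cons (frame p) D))"
  proof (rule sum.cong[OF refl])
    fix p
    have "b ((cons 0 D)(0 := x $ p *s frame p)) = x $ p * b ((cons 0 D)(0 := frame p))"
      by (rule kf_smult[OF b k])
    then show "b ((cons 0 D)(0 := x $ p *s frame p)) = x $ p * b (cons (frame p) D)"
      by (simp only: cons_upd[symmetric])
  qed
  finally show ?thesis .
qed

lemma sum_rearr:
  fixes N :: "complex^('n::finite+'n)^('n+'n)"
  shows "(\<Sum>p\<in>UNIV. \<Sum>q\<in>UNIV. N$p$q * (\<Sum>j<k. (-1)^j * vs j $ q * A p j))
       = (\<Sum>j<k. (-1)^j * (\<Sum>p\<in>UNIV. (N *v vs j)$p * A p j))"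
proof -
  have "(\<Sum>p\<in>UNIV. \<Sum>q\<in>UNIV. N$p$q * (\<Sum>j<k. (-1)^j * vs j $ q * A p j))
      = (\<Sum>p\<in>UNIV. \<Sum>q\<in>UNIV. \<Sum>j<k. (-1)^j * (N$p$q * vs j $ q * A p j))"
    by (intro sum.cong refl) (simp add: sum_distrib_left algebra_simps)
  also have "\<dots> = (\<Sum>p\<in>UNIV. \<Sum>j<k. \<Sum>q\<in>UNIV. (-1)^j * (N$p$q * vs j $ q * A p j))"
    by (rule sum.cong[OF refl], rule sum.swap)
  also have "\<dots> = (\<Sum>j<k. \<Sum>p\<in>UNIV. \<Sum>q\<in>UNIV. (-1)^j * (N$p$q * vs j $ q * A p j))"
    by (rule sum.swap)
  also have "\<dots> = (\<Sum>j<k. (-1)^j * (\<Sum>p\<in>UNIV. (N *v vs j)$p * A p j))"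
    by (intro sum.cong refl) (simp add: matrix_vector_mult_def sum_distrib_left sum_distrib_right algebra_simps)
  finally show ?thesis .
qed

lemma icontr_formula:
  fixes N :: "complex^('n::finite+'n)^('n+'n)"
  assumes a: "is_kform k (a k)"
  shows "icontr N a k vs = (\<Sum>j<k. a k (vs(j := N *v vs j)))"
proof (cases k)
  case 0 then show ?thesis by (simp add: icontr_def wedge1_def)
next
  case (Suc k')
  have "icontr N a k vs = (\<Sum>p\<in>UNIV. \<Sum>q\<in>UNIV. N$p$q *
        (\<Sum>j<k. (-1)^j * vs j $ q * a k (cons (frame p) (delete_arg j vs))))"
    using Suc by (simp add: icontr_def wedge1_def interior_def theta_def mult.assoc)
      (intro sum.cong refl, simp add: cons_def)
  also have "\<dots> = (\<Sum>j<k. (-1)^j * (\<Sum>p\<in>UNIV. (N *v vs j)$p * a k (cons (frame p) (delete_arg j vs))))"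
    by (rule sum_rearr)
  also have "\<dots> = (\<Sum>j<k. (-1)^j * a k (cons (N *v vs j) (delete_arg j vs)))"
  proof (intro sum.cong refl)
    fix j
    have "a k (cons (N *v vs j) (delete_arg j vs)) = (\<Sum>p\<in>UNIV. (N *v vs j)$p * a k (cons (frame p) (delete_arg j vs)))"
      by (rule lin0[OF a]) (simp add: Suc)
    then show "(-1)^j * (\<Sum>p\<in>UNIV. (N *v vs j)$p * a k (cons (frame p) (delete_arg j vs))) = (-1)^j * a k (cons (N *v vs j) (delete_arg j vs))"
      by simp
  qed
  also have "\<dots> = (\<Sum>j<k. a k (vs(j := N *v vs j)))"
    by (rule sum.cong[OF refl]) (simp add: kf_rot[OF a])
  finally show ?thesis .
qed

lemma mv_smult: "(N::complex^'m^'k) *v (c *s x) = c *s (N *v x)"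
  by (simp add: vec_eq_iff matrix_vector_mult_def sum_distrib_left algebra_simps)

lemma kf_der:
  fixes N :: "complex^('n::finite+'n)^('n+'n)"
  assumes b: "is_kform k b"
  shows "is_kform k (\<lambda>vs. \<Sum>j<k. b (vs(j := N *v vs j)))"
  unfolding is_kform_def
proof (intro conjI allI impI)
  fix vs ws :: "nat \<Rightarrow> 'n tv" assume h: "\<forall>i<k. vs i = ws i"
  show "(\<Sum>j<k. b (vs(j := N *v vs j))) = (\<Sum>j<k. b (ws(j := N *v ws j)))"
    by (intro sum.cong refl kf_dep[OF b]) (use h in auto)
next
  fix i x y and vs :: "nat \<Rightarrow> 'n tv" assume i: "i<k"
  have "b ((vs(i := x + y))(j := N *v (vs(i := x + y)) j)) =
        b ((vs(i := x))(j := N *v (vs(i := x)) j)) + b ((vs(i := y))(j := N *v (vs(i := y)) j))"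
    if j: "j<k" for j
  proof (cases "j = i")
    case True
    then show ?thesis using kf_add[OF b i, of vs "N *v x" "N *v y"]
      by (simp add: matrix_vector_right_distrib)
  next
    case False
    then show ?thesis using kf_add[OF b i, of "vs(j := N *v vs j)" x y]
      by (simp add: fun_upd_twist)
  qed
  then show "(\<Sum>j<k. b ((vs(i := x + y))(j := N *v (vs(i := x + y)) j))) =
        (\<Sum>j<k. b ((vs(i := x))(j := N *v (vs(i := x)) j))) + (\<Sum>j<k. b ((vs(i := y))(j := N *v (vs(i := y)) j)))"
    by (simp add: sum.distrib)
next
  fix i c x and vs :: "nat \<Rightarrow> 'n tv" assume i: "i<k"
  have "b ((vs(i := c *s x))(j := N *v (vs(i := c *s x)) j)) =
        c * b ((vs(i := x))(j := N *v (vs(i := x)) j))"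
    if j: "j<k" for j
  proof (cases "j = i")
    case True
    then show ?thesis using kf_smult[OF b i, of vs c "N *v x"]
      by (simp add: mv_smult)
  next
    case False
    then show ?thesis using kf_smult[OF b i, of "vs(j := N *v vs j)" c x]
      by (simp add: fun_upd_twist)
  qed
  then show "(\<Sum>j<k. b ((vs(i := c *s x))(j := N *v (vs(i := c *s x)) j))) =
        c * (\<Sum>j<k. b ((vs(i := x))(j := N *v (vs(i := x)) j)))"
    by (simp add: sum_distrib_left)
next
  fix i l and vs :: "nat \<Rightarrow> 'n tv" assume h: "i < k" "l < k" "i \<noteq> l \<and> vs i = vs l"
  define t where "t j = b (vs(j := N *v vs j))" for j
  have rest: "t j = 0" if "j<k" "j \<noteq> i" "j \<noteq> l" for j
    unfolding t_def by (rule kf_alt[OF b h(1) h(2)]) (use h that in auto)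
  have vsx: "vs = vs(i := vs i, l := vs i)" using h by auto
  have "vs(l := N *v vs l) = vs(i := vs i, l := N *v vs i)" using h by (auto simp: fun_eq_iff)
  then have "t l = b (vs(i := vs i, l := N *v vs i))" unfolding t_def by simp
  also have "\<dots> = - b (vs(i := N *v vs i, l := vs i))"
    by (rule kf_swap[OF b h(1) h(2)]) (use h in auto)
  also have "vs(i := N *v vs i, l := vs i) = vs(i := N *v vs i)"
    using h by (auto simp: fun_eq_iff)
  finally have tl: "t l = - t i" unfolding t_def .
  have "(\<Sum>j<k. t j) = t i + (\<Sum>j\<in>{..<k}-{i}. t j)"
    using h by (simp add: sum.remove)
  also have "(\<Sum>j\<in>{..<k}-{i}. t j) = t l + (\<Sum>j\<in>{..<k}-{i}-{l}. t j)"
    using h by (subst sum.remove[of _ l]) auto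
  also have "(\<Sum>j\<in>{..<k}-{i}-{l}. t j) = 0"
    by (rule sum.neutral) (use rest in auto)
  finally show "(\<Sum>j<k. b (vs(j := N *v vs j))) = 0" using tl unfolding t_def by simp
qed

lemma icontr_fun:
  fixes N :: "complex^('n::finite+'n)^('n+'n)"
  assumes a: "is_kform k (a k)"
  shows "icontr N a k = (\<lambda>vs. \<Sum>j<k. a k (vs(j := N *v vs j)))"
  using icontr_formula[where a=a, OF a] by blast

lemma kf_pow:
  fixes N :: "complex^('n::finite+'n)^('n+'n)"
  assumes a: "is_kform k (a k)"
  shows "is_kform k ((icontr N ^^ m) a k)"
proof (induction m)
  case 0 then show ?case using a by simp
next
  case (Suc m) then show ?case by (simp add: icontr_fun kf_der)
qed

definition modS :: "complex^('n::finite+'n)^('n+'n) \<Rightarrow> nat set \<Rightarrow> (nat \<Rightarrow> 'n tv) \<Rightarrow> nat \<Rightarrow> 'n tv" where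
  "modS N S vs = (\<lambda>i. if i \<in> S then N *v vs i else vs i)"

definition CS :: "nat \<Rightarrow> nat \<Rightarrow> nat set set" where
  "CS k m = {S. S \<subseteq> {..<k} \<and> card S = m}"

lemma finite_CS: "finite (CS k m)"
  by (rule finite_subset[of _ "Pow {..<k}"]) (auto simp: CS_def)

lemma count1:
  assumes j: "j<k"
  shows "(\<Sum>T\<in>{T\<in>CS k (Suc m). j \<in> T}. g T) = (\<Sum>S\<in>{S\<in>CS k m. j\<notin>S}. g (insert j S))"
proof (rule sum.reindex_bij_witness[of _ "insert j" "\<lambda>T. T - {j}"])
  fix T assume "T \<in> {T\<in>CS k (Suc m). j \<in> T}"
  then have T: "T \<subseteq> {..<k}" "card T = Suc m" "j \<in> T" by (auto simp: CS_def)
  have fin: "finite T" using T(1) finite_subset by blast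
  show "insert j (T - {j}) = T" using T by auto
  show "T - {j} \<in> {S\<in>CS k m. j\<notin>S}" using T fin by (auto simp: CS_def)
  show "g (insert j (T - {j})) = g T" using T by (simp add: insert_absorb)
next
  fix S assume "S \<in> {S\<in>CS k m. j\<notin>S}"
  then have S: "S \<subseteq> {..<k}" "card S = m" "j \<notin> S" by (auto simp: CS_def)
  have fin: "finite S" using S(1) finite_subset by blast
  show "insert j S - {j} = S" using S by auto
  show "insert j S \<in> {T\<in>CS k (Suc m). j \<in> T}" using S fin j by (auto simp: CS_def)
qed

lemma count2:
  "(\<Sum>T\<in>CS k (Suc m). of_nat (Suc m) * (g T :: complex)) = (\<Sum>j<k. \<Sum>T\<in>{T\<in>CS k (Suc m). j \<in> T}. g T)"
proof -
  have "(\<Sum>j<k. \<Sum>T\<in>{T\<in>CS k (Suc m). j \<in> T}. g T) = (\<Sum>j<k. \<Sum>T\<in>CS k (Suc m). if j \<in> T then g T else 0)"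
    by (rule sum.cong[OF refl], rule sum.inter_filter[OF finite_CS])
  also have "\<dots> = (\<Sum>T\<in>CS k (Suc m). \<Sum>j<k. if j \<in> T then g T else 0)"
    by (rule sum.swap)
  also have "\<dots> = (\<Sum>T\<in>CS k (Suc m). of_nat (Suc m) * g T)"
  proof (intro sum.cong refl)
    fix T assume "T \<in> CS k (Suc m)"
    then have T: "T \<subseteq> {..<k}" "card T = Suc m" by (auto simp: CS_def)
    have "(\<Sum>j<k. if j \<in> T then g T else 0) = (\<Sum>j\<in>{j\<in>{..<k}. j \<in> T}. g T)"
      by (rule sum.inter_filter[symmetric]) simp
    also have "{j\<in>{..<k}. j \<in> T} = T" using T by auto
    finally show "(\<Sum>j<k. if j \<in> T then g T else 0) = of_nat (Suc m) * g T" using T by simp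
  qed
  finally show ?thesis by simp
qed

lemma pow_formula:
  fixes N :: "complex^('n::finite+'n)^('n+'n)"
  assumes NN: "N ** N = 0" and a: "is_kform k (a k)"
  shows "((icontr N ^^ m) a) k vs = fact m * (\<Sum>S\<in>CS k m. a k (modS N S vs))"
proof (induction m arbitrary: vs)
  case 0
  have "CS k 0 = {{}}" by (auto simp: CS_def card_eq_0_iff intro: finite_subset)
  moreover have "modS N {} vs = vs" by (simp add: modS_def)
  ultimately show ?case by simp
next
  case (Suc m)
  let ?g = "\<lambda>T. a k (modS N T vs)"
  have "((icontr N ^^ Suc m) a) k vs = (\<Sum>j<k. ((icontr N ^^ m) a) k (vs(j := N *v vs j)))"
    using icontr_formula[where a="(icontr N ^^ m) a", OF kf_pow[where a=a, OF a]] by simp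
  also have "\<dots> = (\<Sum>j<k. fact m * (\<Sum>S\<in>CS k m. a k (modS N S (vs(j := N *v vs j)))))"
    using Suc by (simp add: fun_upd_def)
  also have "\<dots> = (\<Sum>j<k. fact m * (\<Sum>S\<in>{S\<in>CS k m. j\<notin>S}. ?g (insert j S)))"
  proof (rule sum.cong[OF refl])
    fix j assume j: "j \<in> {..<k}"
    have "(\<Sum>S\<in>CS k m. a k (modS N S (vs(j := N *v vs j)))) =
          (\<Sum>S\<in>CS k m. if j \<notin> S then ?g (insert j S) else 0)"
    proof (intro sum.cong refl)
      fix S
      show "a k (modS N S (vs(j := N *v vs j))) = (if j \<notin> S then ?g (insert j S) else 0)"
      proof (cases "j \<in> S")
        case True
        have "modS N S (vs(j := N *v vs j)) = (modS N S vs)(j := 0)"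
          using True by (auto simp: modS_def fun_eq_iff matrix_vector_mul_assoc NN)
        then show ?thesis using True kf_zero[OF a] j by simp
      next
        case False
        have "modS N S (vs(j := N *v vs j)) = modS N (insert j S) vs"
          using False by (auto simp: modS_def fun_eq_iff)
        then show ?thesis using False by simp
      qed
    qed
    also have "\<dots> = (\<Sum>S\<in>{S\<in>CS k m. j\<notin>S}. ?g (insert j S))"
      by (rule sum.inter_filter[OF finite_CS, symmetric])
    finally show "fact m * (\<Sum>S\<in>CS k m. a k (modS N S (vs(j := N *v vs j)))) = fact m * (\<Sum>S\<in>{S\<in>CS k m. j\<notin>S}. ?g (insert j S))" by simp
  qed
  also have "\<dots> = fact m * (\<Sum>j<k. \<Sum>T\<in>{T\<in>CS k (Suc m). j \<in> T}. ?g T)"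
    by (simp add: sum_distrib_left count1)
  also have "\<dots> = fact m * (\<Sum>T\<in>CS k (Suc m). of_nat (Suc m) * ?g T)"
    by (simp only: count2)
  also have "\<dots> = fact (Suc m) * (\<Sum>T\<in>CS k (Suc m). ?g T)"
    by (simp add: sum_distrib_left algebra_simps)
  finally show ?case .
qed

lemma multi_exp:
  fixes N :: "complex^('n::finite+'n)^('n+'n)"
  assumes b: "is_kform k b"
  shows "n \<le> k \<Longrightarrow> b (\<lambda>i. if i < n then vs i + s *s (N *v vs i) else vs i)
           = (\<Sum>S\<in>Pow {..<n}. s ^ card S * b (modS N S vs))"
proof (induction n arbitrary: vs)
  case 0
  have "(\<lambda>i. vs i) = vs" by simp
  then show ?case by (simp add: modS_def)
next
  case (Suc n)
  have nk: "n < k" using Suc.prems by simp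
  define w where "w = (\<lambda>i. if i < n then vs i + s *s (N *v vs i) else vs i)"
  define v' where "v' = vs(n := N *v vs n)"
  have e1: "(\<lambda>i. if i < Suc n then vs i + s *s (N *v vs i) else vs i) = w(n := vs n + s *s (N *v vs n))"
    by (auto simp: w_def fun_eq_iff less_Suc_eq)
  have e2: "w(n := vs n) = w" by (auto simp: w_def fun_eq_iff)
  have e3: "w(n := N *v vs n) = (\<lambda>i. if i < n then v' i + s *s (N *v v' i) else v' i)"
    by (auto simp: w_def v'_def fun_eq_iff)
  have "b (\<lambda>i. if i < Suc n then vs i + s *s (N *v vs i) else vs i)
      = b (w(n := vs n)) + s * b (w(n := N *v vs n))"
    by (simp only: e1 kf_add[OF b nk] kf_smult[OF b nk])
  also have "\<dots> = (\<Sum>S\<in>Pow {..<n}. s ^ card S * b (modS N S vs))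
                 + s * (\<Sum>S\<in>Pow {..<n}. s ^ card S * b (modS N S v'))"
    using Suc.IH[of vs] Suc.IH[of v'] Suc.prems by (simp only: e2 e3) (simp add: w_def)
  also have "(\<Sum>S\<in>Pow {..<n}. s ^ card S * b (modS N S v')) =
             (\<Sum>S\<in>Pow {..<n}. s ^ card S * b (modS N (insert n S) vs))"
  proof (rule sum.cong[OF refl])
    fix S assume "S \<in> Pow {..<n}"
    then have "modS N S v' = modS N (insert n S) vs" by (auto simp: modS_def v'_def fun_eq_iff)
    then show "s ^ card S * b (modS N S v') = s ^ card S * b (modS N (insert n S) vs)" by simp
  qed
  also have "s * \<dots> = (\<Sum>S\<in>insert n ` Pow {..<n}. s ^ card S * b (modS N S vs))"
  proof -
    have inj: "inj_on (insert n) (Pow {..<n})"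
      by (rule inj_onI) (metis Pow_iff insert_absorb insert_ident lessThan_iff less_irrefl subsetD)
    have "(\<Sum>S\<in>insert n ` Pow {..<n}. s ^ card S * b (modS N S vs)) =
          (\<Sum>S\<in>Pow {..<n}. s ^ card (insert n S) * b (modS N (insert n S) vs))"
      by (simp add: sum.reindex[OF inj])
    also have "\<dots> = (\<Sum>S\<in>Pow {..<n}. s * (s ^ card S * b (modS N (insert n S) vs)))"
    proof (rule sum.cong[OF refl])
      fix S assume S: "S \<in> Pow {..<n}"
      then have "finite S" "n \<notin> S" using finite_subset by auto
      then show "s ^ card (insert n S) * b (modS N (insert n S) vs) = s * (s ^ card S * b (modS N (insert n S) vs))"
        by simp
    qed
    finally show ?thesis by (simp add: sum_distrib_left)
  qed
  also have "(\<Sum>S\<in>Pow {..<n}. s ^ card S * b (modS N S vs)) +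
             (\<Sum>S\<in>insert n ` Pow {..<n}. s ^ card S * b (modS N S vs)) =
             (\<Sum>S\<in>Pow {..<Suc n}. s ^ card S * b (modS N S vs))"
    by (simp only: lessThan_Suc Pow_insert, rule sum.union_disjoint[symmetric]) auto
  finally show ?case .
qed

lemma sum_by_card:
  "(\<Sum>m\<le>k. \<Sum>S\<in>CS k m. h S) = (\<Sum>S\<in>Pow {..<k}. (h S :: complex))"
proof -
  have "(\<Sum>m\<le>k. \<Sum>S\<in>CS k m. h S) = (\<Sum>m\<le>k. \<Sum>S\<in>Pow {..<k}. if card S = m then h S else 0)"
  proof (rule sum.cong[OF refl])
    fix m
    have e: "CS k m = {S \<in> Pow {..<k}. card S = m}" by (auto simp: CS_def)
    show "(\<Sum>S\<in>CS k m. h S) = (\<Sum>S\<in>Pow {..<k}. if card S = m then h S else 0)"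
      unfolding e by (rule sum.inter_filter) simp
  qed
  also have "\<dots> = (\<Sum>S\<in>Pow {..<k}. \<Sum>m\<le>k. if card S = m then h S else 0)"
    by (rule sum.swap)
  also have "\<dots> = (\<Sum>S\<in>Pow {..<k}. h S)"
  proof (rule sum.cong[OF refl])
    fix S assume "S \<in> Pow {..<k}"
    then have "card S \<le> k" using card_mono[of "{..<k}" S] by auto
    then show "(\<Sum>m\<le>k. if card S = m then h S else 0) = h S"
      by (simp add: sum.delta)
  qed
  finally show ?thesis .
qed

lemma exp_formula:
  fixes N :: "complex^('n::finite+'n)^('n+'n)"
  assumes NN: "N ** N = 0" and a: "is_kform k (a k)"
  shows "exp_contr s N a k vs = a k (\<lambda>i. vs i + s *s (N *v vs i))"
proof -
  have "exp_contr s N a k vs = (\<Sum>m\<le>k. \<Sum>S\<in>CS k m. s ^ card S * a k (modS N S vs))"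
  proof (unfold exp_contr_def, rule sum.cong[OF refl])
    fix m
    have "(\<Sum>S\<in>CS k m. s ^ card S * a k (modS N S vs)) = s ^ m * (\<Sum>S\<in>CS k m. a k (modS N S vs))"
      by (simp add: sum_distrib_left CS_def)
    then show "s ^ m / fact m * (icontr N ^^ m) a k vs = (\<Sum>S\<in>CS k m. s ^ card S * a k (modS N S vs))"
      by (simp add: pow_formula[where a=a, OF NN a])
  qed
  also have "\<dots> = (\<Sum>S\<in>Pow {..<k}. s ^ card S * a k (modS N S vs))"
    by (rule sum_by_card)
  also have "\<dots> = a k (\<lambda>i. if i < k then vs i + s *s (N *v vs i) else vs i)"
    by (rule multi_exp[where b="a k", OF a, symmetric]) simp
  also have "\<dots> = a k (\<lambda>i. vs i + s *s (N *v vs i))"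
    by (rule kf_dep[OF a]) simp
  finally show ?thesis .
qed



lemma mm_add_r: "((A::'a::semiring_1^'n^'m) + B) ** C = A ** C + B ** C"
  by (simp add: vec_eq_iff matrix_matrix_mult_def sum.distrib algebra_simps)
lemma mm_diff_l: "(A::'a::ring_1^'n^'m) ** (B - C) = A ** B - A ** C"
  by (simp add: vec_eq_iff matrix_matrix_mult_def sum_subtractf algebra_simps)
lemma mm_diff_r: "((A::'a::ring_1^'n^'m) - B) ** C = A ** C - B ** C"
  by (simp add: vec_eq_iff matrix_matrix_mult_def sum_subtractf algebra_simps)
lemma mm_neg_l: "(- (A::'a::ring_1^'n^'m)) ** B = - (A ** B)"
  by (simp add: vec_eq_iff matrix_matrix_mult_def sum_negf)
lemma mm_neg_r: "(A::'a::ring_1^'n^'m) ** (- B) = - (A ** B)"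
  by (simp add: vec_eq_iff matrix_matrix_mult_def sum_negf)

lemma sum_UNIV_plus: "sum f (UNIV::('a::finite+'b::finite) set) = sum (\<lambda>i. f (Inl i)) UNIV + sum (\<lambda>i. f (Inr i)) UNIV"
  by (subst UNIV_Plus_UNIV[symmetric], subst sum.Plus) (simp_all add: comp_def)

lemma block_mult: "block P Q R S ** block P' Q' R' S' =
   block (P**P' + Q**R') (P**Q' + Q**S') (R**P' + S**R') (R**Q' + S**S')"
  unfolding vec_eq_iff
proof (intro allI)
  fix p q :: "'a + 'a"
  show "(block P Q R S ** block P' Q' R' S') $ p $ q =
    block (P**P' + Q**R') (P**Q' + Q**S') (R**P' + S**R') (R**Q' + S**S') $ p $ q"
    by (cases p; cases q) (simp_all add: block_def matrix_matrix_mult_def sum_UNIV_plus)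
qed

lemma block_add: "block P Q R S + block P' Q' R' S' = block (P+P') (Q+Q') (R+R') (S+S')"
  by (simp add: vec_eq_iff block_def split: sum.split)
lemma block_diff: "block P Q R S - block P' Q' R' S' = block (P-P') (Q-Q') (R-R') (S-S')"
  by (simp add: vec_eq_iff block_def split: sum.split)
lemma block_mat1: "(mat 1 :: complex^('n::finite+'n)^('n+'n)) = block (mat 1) 0 0 (mat 1)"
  by (simp add: vec_eq_iff block_def mat_def split: sum.split)
lemma block_zero: "(0 :: complex^('n::finite+'n)^('n+'n)) = block 0 0 0 0"
  by (simp add: vec_eq_iff block_def split: sum.split)

lemma blockAlg:
  fixes P :: "complex^'n::finite^'n"
  defines "Q \<equiv> conj_mat P"
  defines "X \<equiv> matrix_inv (mat 1 - P ** Q)"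
  assumes d: "det (mat 1 - P ** Q) \<noteq> 0"
  shows "(mat 1 + block 0 P 0 0 + block 0 0 Q 0) ** (mat 1 - block 0 P 0 0)
            = mat 1 - block 0 0 0 (Q ** P) + block 0 0 Q 0"
    and "block (mat 1) 0 (- (Q ** X)) (matrix_inv (mat 1 - Q ** P))
          ** (mat 1 + block 0 P 0 0 + block 0 0 Q 0) = mat 1 + block 0 P 0 0"
proof -
  show "(mat 1 + block 0 P 0 0 + block 0 0 Q 0) ** (mat 1 - block 0 P 0 0)
            = mat 1 - block 0 0 0 (Q ** P) + block 0 0 Q 0"
    by (simp add: block_mat1 block_add block_diff block_mult mm_diff_l mm_diff_r mm_neg_r)
  have inv: "invertible (mat 1 - P ** Q)" using d invertible_det_nz by blast
  then obtain A' where A': "(mat 1 - P ** Q) ** A' = mat 1 \<and> A' ** (mat 1 - P ** Q) = mat 1"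
    unfolding invertible_def by blast
  have hX: "(mat 1 - P ** Q) ** X = mat 1 \<and> X ** (mat 1 - P ** Q) = mat 1"
    unfolding X_def matrix_inv_def by (rule someI[of _ A'], rule A')
  have K1: "P ** (Q ** X) = X - mat 1"
    using hX by (simp add: mm_diff_r matrix_mul_assoc algebra_simps)
  have K2: "X ** (P ** Q) = X - mat 1"
    using hX by (simp add: mm_diff_l matrix_mul_assoc algebra_simps)
  have K1': "P ** (Q ** (X ** Z)) = X ** Z - Z" for Z
    using K1 by (metis matrix_mul_assoc matrix_mul_lid mm_diff_r)
  have K2': "X ** (P ** (Q ** Z)) = X ** Z - Z" for Z
    using K2 by (metis matrix_mul_assoc matrix_mul_lid mm_diff_r)
  define Y' where "Y' = mat 1 + Q ** (X ** P)"
  have Y1: "(mat 1 - Q ** P) ** Y' = mat 1"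
    unfolding Y'_def
    by (simp add: matrix_add_ldistrib mm_diff_r mm_diff_l mm_add_r matrix_mul_assoc[symmetric] K1')
  have Y2: "Y' ** (mat 1 - Q ** P) = mat 1"
    unfolding Y'_def
    by (simp add: matrix_add_ldistrib mm_diff_r mm_diff_l mm_add_r matrix_mul_assoc[symmetric] K2')
  have S: "matrix_inv (mat 1 - Q ** P) = Y'"
  proof -
    have h: "(mat 1 - Q ** P) ** matrix_inv (mat 1 - Q ** P) = mat 1 \<and> matrix_inv (mat 1 - Q ** P) ** (mat 1 - Q ** P) = mat 1"
      unfolding matrix_inv_def by (rule someI[of _ Y'], use Y1 Y2 in simp)
    have "matrix_inv (mat 1 - Q ** P) = matrix_inv (mat 1 - Q ** P) ** ((mat 1 - Q ** P) ** Y')"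
      using Y1 by simp
    also have "\<dots> = Y'" using h by (simp add: matrix_mul_assoc)
    finally show ?thesis .
  qed
  show "block (mat 1) 0 (- (Q ** X)) (matrix_inv (mat 1 - Q ** P))
          ** (mat 1 + block 0 P 0 0 + block 0 0 Q 0) = mat 1 + block 0 P 0 0"
    unfolding S Y'_def
    by (simp add: block_mat1 block_add block_mult mm_add_r mm_neg_l matrix_mul_assoc[symmetric] K2 K1 mm_diff_l)
qed


lemma simcontr_kform: assumes b: "is_kform k b"
  shows "is_kform k (\<lambda>vs. b (\<lambda>i. (M::complex^('n::finite+'n)^('n+'n)) *v vs i))"
proof (subst is_kform_def, intro conjI allI impI)
  fix vs ws :: "nat \<Rightarrow> 'n tv" assume "\<forall>i<k. vs i = ws i"
  then show "b (\<lambda>i. M *v vs i) = b (\<lambda>i. M *v ws i)" by (intro kf_dep[OF b]) auto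
next
  fix i x y and vs :: "nat \<Rightarrow> 'n tv" assume i: "i<k"
  have e: "(\<lambda>j. M *v (vs(i := z)) j) = (\<lambda>j. M *v vs j)(i := M *v z)" for z by (auto simp: fun_eq_iff)
  show "b (\<lambda>j. M *v (vs(i := x + y)) j) = b (\<lambda>j. M *v (vs(i := x)) j) + b (\<lambda>j. M *v (vs(i := y)) j)"
    unfolding e by (simp only: matrix_vector_right_distrib kf_add[OF b i])
next
  fix i c x and vs :: "nat \<Rightarrow> 'n tv" assume i: "i<k"
  have e: "(\<lambda>j. M *v (vs(i := z)) j) = (\<lambda>j. M *v vs j)(i := M *v z)" for z by (auto simp: fun_eq_iff)
  show "b (\<lambda>j. M *v (vs(i := c *s x)) j) = c * b (\<lambda>j. M *v (vs(i := x)) j)"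
    unfolding e by (simp only: mv_smult kf_smult[OF b i])
next
  fix i j and vs :: "nat \<Rightarrow> 'n tv" assume "i < k" "j < k" "i \<noteq> j \<and> vs i = vs j"
  then show "b (\<lambda>i. M *v vs i) = 0" by (intro kf_alt[OF b, of i j]) auto
qed

lemma simcontr_forms: "w \<in> forms \<Longrightarrow> simcontr M w \<in> forms"
  by (simp add: forms_def simcontr_def simcontr_kform)

lemma exp_fun:
  fixes N :: "complex^('n::finite+'n)^('n+'n)"
  assumes "N ** N = 0" "w \<in> forms"
  shows "exp_contr s N w = (\<lambda>k vs. w k (\<lambda>i. vs i + s *s (N *v vs i)))"
  using assms exp_formula[where a=w] by (auto simp: forms_def fun_eq_iff)

lemma simcontr_comp: "simcontr A (simcontr B w) = simcontr (B ** A) w"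
  by (simp add: simcontr_def matrix_vector_mul_assoc)

theorem mainTheorem13:
  fixes phi :: "complex^'n::finite^'n"
  assumes "det (mat 1 - phi ** conj_mat phi) \<noteq> 0"
  shows "(\<forall>w\<in>forms.
           exp_contr (-1) (block 0 phi 0 0)
             (simcontr (mat 1 + block 0 phi 0 0 + block 0 0 (conj_mat phi) 0) w)
         = simcontr (mat 1 - block 0 0 0 (conj_mat phi ** phi) + block 0 0 (conj_mat phi) 0) w)
       \<and> (\<forall>w\<in>forms.
           inv_into forms (simcontr (mat 1 + block 0 phi 0 0 + block 0 0 (conj_mat phi) 0))
             (exp_contr 1 (block 0 phi 0 0) w)
         = simcontr (block (mat 1) 0
                       (- (conj_mat phi ** matrix_inv (mat 1 - phi ** conj_mat phi)))
                       (matrix_inv (mat 1 - conj_mat phi ** phi))) w)"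
proof -
  define F where "F = block 0 phi 0 0"
  define A where "A = mat 1 + block 0 phi 0 0 + block 0 0 (conj_mat phi) 0"
  define B where "B = block (mat 1) 0
                       (- (conj_mat phi ** matrix_inv (mat 1 - phi ** conj_mat phi)))
                       (matrix_inv (mat 1 - conj_mat phi ** phi))"
  have FF: "F ** F = 0" unfolding F_def by (simp add: block_mult block_zero)
  note alg = blockAlg[OF assms]
  have v1: "x + (-1) *s (F *v x) = (mat 1 - F) *v x" for x :: "'n tv"
    by (simp add: matrix_vector_mult_diff_rdistrib vec_eq_iff)
  have v2: "x + 1 *s (F *v x) = (mat 1 + F) *v x" for x :: "'n tv"
    by (simp add: matrix_vector_mult_add_rdistrib)
  have BA: "B ** A = mat 1 + F" using alg(2) unfolding A_def B_def F_def .
  have part1: "exp_contr (-1) F (simcontr A w)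
         = simcontr (mat 1 - block 0 0 0 (conj_mat phi ** phi) + block 0 0 (conj_mat phi) 0) w"
    if w: "w \<in> forms" for w
  proof -
    have "exp_contr (-1) F (simcontr A w) = simcontr (mat 1 - F) (simcontr A w)"
      by (subst exp_fun[OF FF simcontr_forms[OF w]]) (simp add: v1 simcontr_def matrix_vector_mult_diff_rdistrib)
    also have "\<dots> = simcontr (A ** (mat 1 - F)) w" by (rule simcontr_comp)
    finally show ?thesis using alg(1) unfolding A_def F_def by simp
  qed
  have inj: "inj_on (simcontr A) forms"
  proof -
    have "((mat 1 - F) ** B) ** A = mat 1"
      by (simp add: BA flip: matrix_mul_assoc) (simp add: matrix_add_ldistrib mm_diff_r FF)
    then obtain R where R: "A ** R = mat 1" using matrix_left_right_inverse by blast
    show ?thesis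
    proof (rule inj_onI)
      fix w1 w2 :: "'n form" assume "simcontr A w1 = simcontr A w2"
      then have "simcontr R (simcontr A w1) = simcontr R (simcontr A w2)" by simp
      then show "w1 = w2" by (simp only: simcontr_comp R) (simp add: simcontr_def)
    qed
  qed
  have part2: "inv_into forms (simcontr A) (exp_contr 1 F w) = simcontr B w"
    if w: "w \<in> forms" for w
  proof -
    have "exp_contr 1 F w = simcontr (mat 1 + F) w"
      by (subst exp_fun[OF FF w]) (simp add: simcontr_def matrix_vector_mult_add_rdistrib)
    also have "\<dots> = simcontr A (simcontr B w)" by (simp add: simcontr_comp BA)
    finally show ?thesis using inv_into_f_f[OF inj simcontr_forms[OF w]] by simp
  qed
  show ?thesis using part1 part2 unfolding A_def B_def F_def by blast
qed

end
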